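(* For every Motzkin tree $T$ and every $m\in\mathbb{N}$, the following are equivalent: 1. there exists exactly one labeled Motzkin tree $t$ such that $\mathrm{skeleton}(t)=T$ and $t$ is $m$-open; 2. $\mathrm{ucs1\_aux}(T,m)$ holds.
   Context: Motzkin trees are the terms generated by a leaf $v$, a unary constructor $l$ and a binary constructor $a$. Labeled Motzkin trees are terms generated by $t ::= \mathrm{var}(i) \mid \mathrm{lam}(t) \mid \mathrm{app}(t,t)$ with $i\in\mathbb{N}$; they represent $\lambda$-terms in de Bruijn form. The skeleton function is defined by $\mathrm{skeleton}(\mathrm{var}(i))=v$, $\mathrm{skeleton}(\mathrm{lam}(t))=l(\mathrm{skeleton}(t))$, and $\mathrm{skeleton}(\mathrm{app}(t_1,t_2))=a(\mathrm{skeleton}(t_1),\mathrm{skeleton}(t_2))$. For $m\in\mathbb{N}$, "$t$ is $m$-open" is defined recursively: - $\mathrm{var}(i)$ is $m$-open iff $i<m$; - $\mathrm{lam}(t)$ is $m$-open iff $t$ is $(m+1)$-open; - $\mathrm{app}(t_1,t_2)$ is $m$-open iff both $t_1$ and $t_2$ are $m$-open. The predicate $\mathrm{ucs1\_aux}(T,m)$ holds iff, for every leaf of $T$, $m$ plus the number of unary nodes on the path from the root of $T$ to that leaf equals $1$. *)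

theory Defs
  imports Main
begin

datatype motzkin = v | l motzkin | a motzkin motzkin

datatype lmt = var nat | lam lmt | app lmt lmt

fun skeleton :: "lmt \<Rightarrow> motzkin" where
  "skeleton (var i) = v"
| "skeleton (lam t) = l (skeleton t)"
| "skeleton (app t1 t2) = a (skeleton t1) (skeleton t2)"

fun is_open :: "nat \<Rightarrow> lmt \<Rightarrow> bool" where
  "is_open m (var i) = (i < m)"
| "is_open m (lam t) = is_open (Suc m) t"
| "is_open m (app t1 t2) = (is_open m t1 \<and> is_open m t2)"

text \<open>Multiset-free description of leaves: the set of numbers of unary nodes on
  the root-to-leaf paths of a Motzkin tree (one entry per leaf path).\<close>
fun leaf_unary_counts :: "motzkin \<Rightarrow> nat set" where
  "leaf_unary_counts v = {0}"
| "leaf_unary_counts (l T) = Suc ` leaf_unary_counts T"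
| "leaf_unary_counts (a T1 T2) = leaf_unary_counts T1 \<union> leaf_unary_counts T2"

definition ucs1_aux :: "motzkin \<Rightarrow> nat \<Rightarrow> bool" where
  "ucs1_aux T m \<longleftrightarrow> (\<forall>k \<in> leaf_unary_counts T. m + k = 1)"

end

theory Submission
  imports Defs
begin

lemma skel_v: "skeleton t = v \<longleftrightarrow> (\<exists>i. t = var i)"
  by (cases t) auto

lemma skel_l: "skeleton t = l T \<longleftrightarrow> (\<exists>s. t = lam s \<and> skeleton s = T)"
  by (cases t) auto

lemma skel_a: "skeleton t = a T1 T2 \<longleftrightarrow> (\<exists>s1 s2. t = app s1 s2 \<and> skeleton s1 = T1 \<and> skeleton s2 = T2)"
  by (cases t) auto

lemma eu_v: "(\<exists>!t. skeleton t = v \<and> is_open m t) \<longleftrightarrow> m = 1"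
proof
  assume h: "\<exists>!t. skeleton t = v \<and> is_open m t"
  then obtain t where t: "skeleton t = v" "is_open m t"
    and u: "\<And>t'. skeleton t' = v \<and> is_open m t' \<Longrightarrow> t' = t" by blast
  then obtain i where "t = var i" using skel_v by blast
  with t have "m \<ge> 1" by simp
  moreover have "m \<le> 1"
  proof (rule ccontr)
    assume "\<not> m \<le> 1"
    then have "var 0 = t" "var 1 = t" using u by auto
    then show False by (metis lmt.inject(1) zero_neq_one)
  qed
  ultimately show "m = 1" by simp
next
  assume "m = 1"
  then show "\<exists>!t. skeleton t = v \<and> is_open m t"
    by (intro ex1I[of _ "var 0"]) (auto simp: skel_v)
qed

lemma eu_l: "(\<exists>!t. skeleton t = l T \<and> is_open m t) \<longleftrightarrow> (\<exists>!s. skeleton s = T \<and> is_open (Suc m) s)"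
proof
  assume "\<exists>!t. skeleton t = l T \<and> is_open m t"
  then obtain t where t: "skeleton t = l T" "is_open m t"
    and u: "\<And>t'. skeleton t' = l T \<and> is_open m t' \<Longrightarrow> t' = t" by blast
  then obtain s where s: "t = lam s" "skeleton s = T" using skel_l by blast
  show "\<exists>!s. skeleton s = T \<and> is_open (Suc m) s"
  proof (intro ex1I[of _ s])
    show "skeleton s = T \<and> is_open (Suc m) s" using s t by simp
  next
    fix s' assume "skeleton s' = T \<and> is_open (Suc m) s'"
    then have "lam s' = t" using u by simp
    then show "s' = s" using s by simp
  qed
next
  assume "\<exists>!s. skeleton s = T \<and> is_open (Suc m) s"
  then obtain s where s: "skeleton s = T" "is_open (Suc m) s"
    and u: "\<And>s'. skeleton s' = T \<and> is_open (Suc m) s' \<Longrightarrow> s' = s" by blast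
  show "\<exists>!t. skeleton t = l T \<and> is_open m t"
  proof (intro ex1I[of _ "lam s"])
    show "skeleton (lam s) = l T \<and> is_open m (lam s)" using s by simp
  next
    fix t assume "skeleton t = l T \<and> is_open m t"
    then show "t = lam s" using u by (auto simp: skel_l)
  qed
qed

lemma eu_a: "(\<exists>!t. skeleton t = a T1 T2 \<and> is_open m t) \<longleftrightarrow>
   (\<exists>!s. skeleton s = T1 \<and> is_open m s) \<and> (\<exists>!s. skeleton s = T2 \<and> is_open m s)"
proof
  assume "\<exists>!t. skeleton t = a T1 T2 \<and> is_open m t"
  then obtain t where t: "skeleton t = a T1 T2" "is_open m t"
    and u: "\<And>t'. skeleton t' = a T1 T2 \<and> is_open m t' \<Longrightarrow> t' = t" by blast
  then obtain s1 s2 where s: "t = app s1 s2" "skeleton s1 = T1" "skeleton s2 = T2" using skel_a by blast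
  have o: "is_open m s1" "is_open m s2" using t s by auto
  show "(\<exists>!s. skeleton s = T1 \<and> is_open m s) \<and> (\<exists>!s. skeleton s = T2 \<and> is_open m s)"
  proof
    show "\<exists>!s. skeleton s = T1 \<and> is_open m s"
    proof (intro ex1I[of _ s1])
      show "skeleton s1 = T1 \<and> is_open m s1" using s o by simp
    next
      fix s' assume "skeleton s' = T1 \<and> is_open m s'"
      then have "app s' s2 = app s1 s2" using u[of "app s' s2"] s o by simp
      then show "s' = s1" using s by simp
    qed
  next
    show "\<exists>!s. skeleton s = T2 \<and> is_open m s"
    proof (intro ex1I[of _ s2])
      show "skeleton s2 = T2 \<and> is_open m s2" using s o by simp
    next
      fix s' assume "skeleton s' = T2 \<and> is_open m s'"
      then have "app s1 s' = app s1 s2" using u[of "app s1 s'"] s o by simp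
      then show "s' = s2" using s by simp
    qed
  qed
next
  assume "(\<exists>!s. skeleton s = T1 \<and> is_open m s) \<and> (\<exists>!s. skeleton s = T2 \<and> is_open m s)"
  then obtain s1 s2 where s: "skeleton s1 = T1" "is_open m s1" "skeleton s2 = T2" "is_open m s2"
    and u1: "\<And>s'. skeleton s' = T1 \<and> is_open m s' \<Longrightarrow> s' = s1"
    and u2: "\<And>s'. skeleton s' = T2 \<and> is_open m s' \<Longrightarrow> s' = s2" by blast
  show "\<exists>!t. skeleton t = a T1 T2 \<and> is_open m t"
  proof (intro ex1I[of _ "app s1 s2"])
    show "skeleton (app s1 s2) = a T1 T2 \<and> is_open m (app s1 s2)" using s by simp
  next
    fix t assume "skeleton t = a T1 T2 \<and> is_open m t"
    then show "t = app s1 s2" using u1 u2 by (auto simp: skel_a)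
  qed
qed

lemma ucs_v: "ucs1_aux v m \<longleftrightarrow> m = 1" by (simp add: ucs1_aux_def)
lemma ucs_l: "ucs1_aux (l T) m \<longleftrightarrow> ucs1_aux T (Suc m)" by (simp add: ucs1_aux_def)
lemma ucs_a: "ucs1_aux (a T1 T2) m \<longleftrightarrow> ucs1_aux T1 m \<and> ucs1_aux T2 m"
  by (auto simp add: ucs1_aux_def)

theorem mainTheorem5:
  fixes T :: motzkin and m :: nat
  shows "(\<exists>!t. skeleton t = T \<and> is_open m t) \<longleftrightarrow> ucs1_aux T m"
proof (induction T arbitrary: m)
  case v then show ?case using eu_v ucs_v by simp
next
  case (l T) then show ?case using eu_l ucs_l by simp
next
  case (a T1 T2) then show ?case using eu_a ucs_a by simp
qed

end
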